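(* Let $B$ be an $n\times N$ complex matrix with columns $x_1,\dots,x_N\in\mathbb{C}^n$ and rows $w_1,\dots,w_n\in\mathbb{C}^N$. Then $\binom{n+1}{2}\sum_{i,j}|\langle x_i|x_j\rangle|^{4} = \big(\sum_i\langle x_i|x_i\rangle^2\big)^2$ if and only if the vectors of the family $$\{w_i^{(2)} : 1\le i\le n\}\cup\{\sqrt2\, w_i\circ w_j : 1\le i<j\le n\}$$ all have the same length and are pairwise orthogonal.
   Context: For vectors of equal size, the Schur product $a\circ b$ is the entrywise product and $a^{(2)}=a\circ a$. $\langle x|y\rangle=\sum_t\overline{x_t}y_t$. *)

theory Defs
  imports Complex_Main "Jordan_Normal_Form.Matrix"
begin

definition cinner :: "complex vec \<Rightarrow> complex vec \<Rightarrow> complex" where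
  "cinner x y = (\<Sum>t<dim_vec x. cnj (x $ t) * y $ t)"

definition schur :: "complex vec \<Rightarrow> complex vec \<Rightarrow> complex vec" where
  "schur a b = vec (dim_vec a) (\<lambda>t. a $ t * b $ t)"

definition vlen :: "complex vec \<Rightarrow> real" where
  "vlen v = sqrt (\<Sum>t<dim_vec v. (cmod (v $ t))\<^sup>2)"

text \<open>The family indexed by pairs (i,j) with i \<le> j < n: w_i^(2) for i = j and
  sqrt 2 (w_i o w_j) for i < j, where w_i = row B i.\<close>
definition fam :: "complex mat \<Rightarrow> nat \<times> nat \<Rightarrow> complex vec" where
  "fam B p = (if fst p = snd p then schur (row B (fst p)) (row B (fst p))
              else complex_of_real (sqrt 2) \<cdot>\<^sub>v schur (row B (fst p)) (row B (snd p)))"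

definition fam_index :: "nat \<Rightarrow> (nat \<times> nat) set" where
  "fam_index n = {(i, j). i \<le> j \<and> j < n}"

end

theory Submission imports Defs begin

lemma fam_index_Suc: "fam_index (Suc n) = fam_index n \<union> (\<lambda>k. (k, n)) ` {..n}"
  unfolding fam_index_def by auto

lemma finite_fam_index: "finite (fam_index n)"
proof -
  have "fam_index n \<subseteq> {..<n} \<times> {..<n}" unfolding fam_index_def by auto
  then show ?thesis by (rule finite_subset) auto
qed

lemma sum_fam_Suc:
  "sum g (fam_index (Suc n)) = sum g (fam_index n) + (\<Sum>k\<le>n. g (k, n))"
proof -
  have d: "fam_index n \<inter> (\<lambda>k. (k, n)) ` {..n} = {}" unfolding fam_index_def by auto
  have "sum g (fam_index (Suc n)) = sum g (fam_index n) + sum g ((\<lambda>k. (k, n)) ` {..n})"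
    unfolding fam_index_Suc by (rule sum.union_disjoint) (auto simp: finite_fam_index d)
  also have "sum g ((\<lambda>k. (k, n)) ` {..n}) = (\<Sum>k\<le>n. g (k, n))"
    by (subst sum.reindex) (auto simp: inj_on_def)
  finally show ?thesis .
qed

lemma sum_atMost_split: "(\<Sum>k\<le>(n::nat). g k) = (\<Sum>k<n. g k) + g n"
proof -
  have "{..n} = insert n {..<n}" by auto
  then show ?thesis by (simp add: add.commute)
qed

lemma card_fam_index: "card (fam_index n) = (n + 1) choose 2"
proof (induction n)
  case 0 then show ?case unfolding fam_index_def by simp
next
  case (Suc n)
  have "card (fam_index (Suc n)) = card (fam_index n) + (n + 1)"
    using sum_fam_Suc[of "\<lambda>_. 1::nat" n] by simp
  also have "((Suc n + 1) choose 2) = ((n+1) choose 2) + (n+1)" 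
  proof -
    have "Suc (Suc n) choose (Suc (Suc 0)) = (Suc n choose (Suc 0)) + (Suc n choose (Suc (Suc 0)))"
      by (rule binomial_Suc_Suc)
    then show ?thesis by (simp add: numeral_2_eq_2)
  qed
  ultimately show ?case using Suc by simp
qed

lemma sym_sum:
  fixes h :: "nat \<Rightarrow> nat \<Rightarrow> 'a::comm_ring_1"
  assumes sym: "\<And>k l. h k l = h l k"
  shows "(\<Sum>k<n. \<Sum>l<n. h k l) = (\<Sum>p\<in>fam_index n. if fst p = snd p then h (fst p) (snd p) else 2 * h (fst p) (snd p))"
proof -
  define G where "G p = (if fst p = snd p then h (fst p) (snd p) else 2 * h (fst p) (snd p))" for p
  have "(\<Sum>k<n. \<Sum>l<n. h k l) = (\<Sum>p\<in>fam_index n. G p)"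
  proof (induction n)
    case 0 then show ?case unfolding fam_index_def by simp
  next
    case (Suc n)
    have e: "(\<Sum>l<n. h n l) = (\<Sum>k<n. h k n)" by (intro sum.cong refl) (rule sym)
    have A: "(\<Sum>k<Suc n. \<Sum>l<Suc n. h k l) = (\<Sum>k<n. \<Sum>l<n. h k l) + (\<Sum>k<n. h k n) + (\<Sum>l<n. h n l) + h n n"
      by (simp add: sum.distrib algebra_simps)
    have B: "(\<Sum>k\<le>n. G (k, n)) = (\<Sum>k<n. 2 * h k n) + h n n"
      unfolding sum_atMost_split G_def by simp
    have C: "(\<Sum>k<n. 2 * h k n) = (\<Sum>k<n. h k n) + (\<Sum>k<n. h k n)"
      by (simp only: mult_2 sum.distrib)
    have "(\<Sum>p\<in>fam_index (Suc n). G p) = (\<Sum>p\<in>fam_index n. G p) + (\<Sum>k\<le>n. G (k, n))"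
      by (rule sum_fam_Suc)
    then show ?case using Suc A B C e by (simp only:) (simp add: algebra_simps)
  qed
  then show ?thesis by (simp add: G_def)
qed

lemma cs_equal:
  fixes I :: "'a set" and a :: "'a \<Rightarrow> real" and M :: "'a \<Rightarrow> 'a \<Rightarrow> real"
  assumes fin: "finite I" and Mnn: "\<And>p q. M p q \<ge> 0" and Md: "\<And>p. M p p = (a p)\<^sup>2"
  shows "(real (card I) * (\<Sum>p\<in>I. \<Sum>q\<in>I. M p q) = (\<Sum>p\<in>I. a p)\<^sup>2) \<longleftrightarrow>
         ((\<forall>p\<in>I. \<forall>q\<in>I. a p = a q) \<and> (\<forall>p\<in>I. \<forall>q\<in>I. p \<noteq> q \<longrightarrow> M p q = 0))"
proof
  define d where "d = real (card I)"
  define T where "T = (\<Sum>p\<in>I. a p)"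
  define m where "m = T / d"
  have diag: "(\<Sum>p\<in>I. \<Sum>q\<in>I. M p q) = (\<Sum>p\<in>I. (a p)\<^sup>2) + (\<Sum>p\<in>I. \<Sum>q\<in>I-{p}. M p q)"
  proof -
    have "(\<Sum>q\<in>I. M p q) = M p p + (\<Sum>q\<in>I-{p}. M p q)" if "p \<in> I" for p
      using that fin by (simp add: sum.remove)
    then show ?thesis using Md by (simp add: sum.distrib)
  qed
  have offnn: "(\<Sum>p\<in>I. \<Sum>q\<in>I-{p}. M p q) \<ge> 0" by (intro sum_nonneg) (simp add: Mnn)
  assume eq: "real (card I) * (\<Sum>p\<in>I. \<Sum>q\<in>I. M p q) = (\<Sum>p\<in>I. a p)\<^sup>2"
  show "(\<forall>p\<in>I. \<forall>q\<in>I. a p = a q) \<and> (\<forall>p\<in>I. \<forall>q\<in>I. p \<noteq> q \<longrightarrow> M p q = 0)"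
  proof (cases "I = {}")
    case True then show ?thesis by simp
  next
    case False
    then have dpos: "d > 0" using fin by (simp add: d_def card_gt_0_iff)
    have sq: "(\<Sum>p\<in>I. (a p - m)\<^sup>2) = (\<Sum>p\<in>I. (a p)\<^sup>2) - T\<^sup>2 / d"
    proof -
      have "(\<Sum>p\<in>I. (a p - m)\<^sup>2) = (\<Sum>p\<in>I. (a p)\<^sup>2 - 2 * m * a p + m\<^sup>2)"
        by (simp add: power2_eq_square algebra_simps)
      also have "\<dots> = (\<Sum>p\<in>I. (a p)\<^sup>2) - 2 * m * T + d * m\<^sup>2"
        by (simp add: sum.distrib sum_subtractf sum_distrib_left T_def d_def)
      also have "\<dots> = (\<Sum>p\<in>I. (a p)\<^sup>2) - T\<^sup>2 / d"
        using dpos by (simp add: m_def power2_eq_square field_simps)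
      finally show ?thesis .
    qed
    have nn: "(\<Sum>p\<in>I. (a p - m)\<^sup>2) \<ge> 0" by (simp add: sum_nonneg)
    have eq2: "(\<Sum>p\<in>I. \<Sum>q\<in>I. M p q) = T\<^sup>2 / d"
      using eq dpos by (simp add: d_def T_def field_simps)
    have z1: "(\<Sum>p\<in>I. (a p - m)\<^sup>2) = 0" and z2: "(\<Sum>p\<in>I. \<Sum>q\<in>I-{p}. M p q) = 0"
      using sq nn offnn diag eq2 by linarith+
    have "\<forall>p\<in>I. (a p - m)\<^sup>2 = 0"
      using sum_nonneg_eq_0_iff[OF fin, of "\<lambda>p. (a p - m)\<^sup>2"] z1 by simp
    then have A: "\<forall>p\<in>I. a p = m" by simp
    have "\<forall>p\<in>I. (\<Sum>q\<in>I-{p}. M p q) = 0"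
      using sum_nonneg_eq_0_iff[OF fin, of "\<lambda>p. \<Sum>q\<in>I-{p}. M p q"] z2 Mnn
      by (simp add: sum_nonneg)
    then have "\<forall>p\<in>I. \<forall>q\<in>I-{p}. M p q = 0"
      using sum_nonneg_eq_0_iff fin Mnn by (metis finite_Diff)
    then show ?thesis using A by auto
  qed
next
  assume H: "(\<forall>p\<in>I. \<forall>q\<in>I. a p = a q) \<and> (\<forall>p\<in>I. \<forall>q\<in>I. p \<noteq> q \<longrightarrow> M p q = 0)"
  show "real (card I) * (\<Sum>p\<in>I. \<Sum>q\<in>I. M p q) = (\<Sum>p\<in>I. a p)\<^sup>2"
  proof (cases "I = {}")
    case True then show ?thesis by simp
  next
    case False
    then obtain p0 where p0: "p0 \<in> I" by auto
    define c where "c = a p0"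
    have ac: "\<forall>p\<in>I. a p = c" using H p0 unfolding c_def by blast
    have "\<forall>p\<in>I. (\<Sum>q\<in>I. M p q) = c\<^sup>2"
    proof
      fix p assume p: "p \<in> I"
      have "(\<Sum>q\<in>I. M p q) = M p p + (\<Sum>q\<in>I-{p}. M p q)"
        using p fin by (simp add: sum.remove)
      also have "(\<Sum>q\<in>I-{p}. M p q) = 0" using H p by (intro sum.neutral) auto
      finally show "(\<Sum>q\<in>I. M p q) = c\<^sup>2" using Md[of p] ac p by simp
    qed
    then have "(\<Sum>p\<in>I. \<Sum>q\<in>I. M p q) = real (card I) * c\<^sup>2" by simp
    moreover have "(\<Sum>p\<in>I. a p) = real (card I) * c" using ac by simp
    ultimately show ?thesis by (simp add: power2_eq_square)
  qed
qed
lemma quart: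
  fixes F :: "'p \<Rightarrow> nat \<Rightarrow> complex"
  shows "(\<Sum>i<N. \<Sum>j<N. (\<Sum>p\<in>I. cnj (F p i) * F p j) * cnj (\<Sum>p\<in>I. cnj (F p i) * F p j))
       = (\<Sum>p\<in>I. \<Sum>q\<in>I. (\<Sum>i<N. cnj (F p i) * F q i) * cnj (\<Sum>i<N. cnj (F p i) * F q i))"
proof -
  define X where "X i j p q = cnj (F p i) * F p j * (F q i * cnj (F q j))" for i j p q
  have "(\<Sum>i<N. \<Sum>j<N. (\<Sum>p\<in>I. cnj (F p i) * F p j) * cnj (\<Sum>p\<in>I. cnj (F p i) * F p j))
      = (\<Sum>i<N. \<Sum>j<N. \<Sum>p\<in>I. \<Sum>q\<in>I. X i j p q)"
    by (simp add: sum_product X_def)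
  also have "\<dots> = (\<Sum>i<N. \<Sum>p\<in>I. \<Sum>j<N. \<Sum>q\<in>I. X i j p q)"
    by (intro sum.cong refl) (rule sum.swap)
  also have "\<dots> = (\<Sum>i<N. \<Sum>p\<in>I. \<Sum>q\<in>I. \<Sum>j<N. X i j p q)"
    by (intro sum.cong refl) (rule sum.swap)
  also have "\<dots> = (\<Sum>p\<in>I. \<Sum>i<N. \<Sum>q\<in>I. \<Sum>j<N. X i j p q)"
    by (rule sum.swap)
  also have "\<dots> = (\<Sum>p\<in>I. \<Sum>q\<in>I. \<Sum>i<N. \<Sum>j<N. X i j p q)"
    by (intro sum.cong refl) (rule sum.swap)
  also have "\<dots> = (\<Sum>p\<in>I. \<Sum>q\<in>I. (\<Sum>i<N. cnj (F p i) * F q i) * cnj (\<Sum>i<N. cnj (F p i) * F q i))"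
  proof (intro sum.cong refl)
    fix p q
    have "(\<Sum>i<N. cnj (F p i) * F q i) * cnj (\<Sum>i<N. cnj (F p i) * F q i)
        = (\<Sum>i<N. cnj (F p i) * F q i) * (\<Sum>j<N. F p j * cnj (F q j))" by simp
    also have "\<dots> = (\<Sum>i<N. \<Sum>j<N. X i j p q)"
      unfolding sum_product X_def by (intro sum.cong refl) (simp add: mult_ac)
    finally show "(\<Sum>i<N. \<Sum>j<N. X i j p q) = (\<Sum>i<N. cnj (F p i) * F q i) * cnj (\<Sum>i<N. cnj (F p i) * F q i)" by simp
  qed
  finally show ?thesis .
qed


theorem corollary5:
  fixes B :: "complex mat" and n N :: nat
  assumes "B \<in> carrier_mat n N"
  shows "(complex_of_real (real ((n + 1) choose 2) *
            (\<Sum>i<N. \<Sum>j<N. (cmod (cinner (col B i) (col B j))) ^ 4))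
          = (\<Sum>i<N. (cinner (col B i) (col B i))\<^sup>2)\<^sup>2)
     \<longleftrightarrow>
     ((\<forall>p\<in>fam_index n. \<forall>q\<in>fam_index n. vlen (fam B p) = vlen (fam B q)) \<and>
      (\<forall>p\<in>fam_index n. \<forall>q\<in>fam_index n. p \<noteq> q \<longrightarrow> cinner (fam B p) (fam B q) = 0))"
proof -
  have dimB: "dim_row B = n" "dim_col B = N" using assms by auto
  define I where "I = fam_index n"
  have finI: "finite I" unfolding I_def by (rule finite_fam_index)
  define F where "F p i = fam B p $ i" for p i
  define a where "a p = (\<Sum>i<N. (cmod (F p i))\<^sup>2)" for p
  define M where "M p q = (cmod (cinner (fam B p) (fam B q)))\<^sup>2" for p q
  have dimf: "dim_vec (fam B p) = N" for p
    by (simp add: fam_def schur_def dimB)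
  have cinf: "cinner (fam B p) (fam B q) = (\<Sum>i<N. cnj (F p i) * F q i)" for p q
    unfolding cinner_def dimf F_def ..
  have vl: "vlen (fam B p) = sqrt (a p)" for p
    unfolding vlen_def dimf a_def F_def ..
  have Fval: "F p i = (if fst p = snd p then B $$ (fst p, i) * B $$ (fst p, i)
      else complex_of_real (sqrt 2) * (B $$ (fst p, i) * B $$ (snd p, i)))"
    if "p \<in> I" "i < N" for p i
  proof -
    have "fst p < n" "snd p < n" using that unfolding I_def fam_index_def by auto
    then show ?thesis using that(2) by (simp add: F_def fam_def schur_def dimB)
  qed
  have colinner: "cinner (col B i) (col B j) = (\<Sum>k<n. cnj (B $$ (k, i)) * B $$ (k, j))"
    if "i < N" "j < N" for i j
    using that by (simp add: cinner_def dimB)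
  have s2: "complex_of_real (sqrt 2) * complex_of_real (sqrt 2) = 2"
    by (simp flip: of_real_mult)
  have G: "(cinner (col B i) (col B j))\<^sup>2 = (\<Sum>p\<in>I. cnj (F p i) * F p j)"
    if ij: "i < N" "j < N" for i j
  proof -
    define h where "h k l = (cnj (B $$ (k, i)) * B $$ (k, j)) * (cnj (B $$ (l, i)) * B $$ (l, j))" for k l
    have hs: "h k l = h l k" for k l unfolding h_def by (simp add: mult_ac)
    have "(cinner (col B i) (col B j))\<^sup>2 = (\<Sum>k<n. \<Sum>l<n. h k l)"
      unfolding colinner[OF ij] power2_eq_square sum_product h_def ..
    also have "\<dots> = (\<Sum>p\<in>I. if fst p = snd p then h (fst p) (snd p) else 2 * h (fst p) (snd p))"
      unfolding I_def by (rule sym_sum) (rule hs)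
    also have "\<dots> = (\<Sum>p\<in>I. cnj (F p i) * F p j)"
    proof (intro sum.cong refl)
      fix p assume p: "p \<in> I"
      show "(if fst p = snd p then h (fst p) (snd p) else 2 * h (fst p) (snd p)) = cnj (F p i) * F p j"
      proof (cases "fst p = snd p")
        case True then show ?thesis using Fval[OF p ij(1)] Fval[OF p ij(2)] by (simp add: h_def mult_ac)
      next
        case False
        have "cnj (F p i) * F p j = (complex_of_real (sqrt 2) * complex_of_real (sqrt 2)) *
            h (fst p) (snd p)"
          using False Fval[OF p ij(1)] Fval[OF p ij(2)] by (simp add: h_def mult_ac)
        then show ?thesis using False s2 by simp
      qed
    qed
    finally show ?thesis .
  qed
  have nsq: "complex_of_real ((cmod z)\<^sup>2) = z * cnj z" for z :: complex
    by (rule complex_norm_square)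
  have Q: "(\<Sum>i<N. \<Sum>j<N. (cmod (cinner (col B i) (col B j))) ^ 4) = (\<Sum>p\<in>I. \<Sum>q\<in>I. M p q)"
  proof -
    have "complex_of_real (\<Sum>i<N. \<Sum>j<N. (cmod (cinner (col B i) (col B j))) ^ 4)
        = (\<Sum>i<N. \<Sum>j<N. (\<Sum>p\<in>I. cnj (F p i) * F p j) * cnj (\<Sum>p\<in>I. cnj (F p i) * F p j))"
    proof (simp only: of_real_sum, intro sum.cong refl)
      fix i j assume "i \<in> {..<N}" "j \<in> {..<N}"
      then have ij: "i < N" "j < N" by auto
      have "(cmod (cinner (col B i) (col B j))) ^ 4 = (cmod ((cinner (col B i) (col B j))\<^sup>2))\<^sup>2"
        by (simp add: norm_power flip: power_mult)
      then show "complex_of_real ((cmod (cinner (col B i) (col B j))) ^ 4)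
          = (\<Sum>p\<in>I. cnj (F p i) * F p j) * cnj (\<Sum>p\<in>I. cnj (F p i) * F p j)"
        using nsq G[OF ij] by metis
    qed
    also have "\<dots> = (\<Sum>p\<in>I. \<Sum>q\<in>I. (\<Sum>i<N. cnj (F p i) * F q i) * cnj (\<Sum>i<N. cnj (F p i) * F q i))"
      by (rule quart)
    also have "\<dots> = complex_of_real (\<Sum>p\<in>I. \<Sum>q\<in>I. M p q)"
      by (simp only: of_real_sum M_def nsq cinf)
    finally show ?thesis by (simp only: of_real_eq_iff)
  qed
  have T: "(\<Sum>i<N. (cinner (col B i) (col B i))\<^sup>2) = complex_of_real (\<Sum>p\<in>I. a p)"
  proof -
    have "(\<Sum>i<N. (cinner (col B i) (col B i))\<^sup>2) = (\<Sum>i<N. \<Sum>p\<in>I. cnj (F p i) * F p i)"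
      by (intro sum.cong refl) (simp add: G)
    also have "\<dots> = (\<Sum>p\<in>I. \<Sum>i<N. cnj (F p i) * F p i)" by (rule sum.swap)
    also have "\<dots> = complex_of_real (\<Sum>p\<in>I. a p)"
      by (simp only: of_real_sum a_def nsq mult.commute)
    finally show ?thesis .
  qed
  have anonneg: "a p \<ge> 0" for p unfolding a_def by (simp add: sum_nonneg)
  have Md: "M p p = (a p)\<^sup>2" for p
  proof -
    have "cinner (fam B p) (fam B p) = complex_of_real (a p)"
      unfolding cinf a_def of_real_sum by (simp only: nsq mult.commute)
    then show ?thesis using anonneg[of p] by (simp add: M_def)
  qed
  have Mnn: "M p q \<ge> 0" for p q unfolding M_def by simp
  have cardI: "real (card I) = real ((n + 1) choose 2)" unfolding I_def card_fam_index ..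
  have "(complex_of_real (real ((n + 1) choose 2) *
            (\<Sum>i<N. \<Sum>j<N. (cmod (cinner (col B i) (col B j))) ^ 4))
          = (\<Sum>i<N. (cinner (col B i) (col B i))\<^sup>2)\<^sup>2)
      \<longleftrightarrow> (real (card I) * (\<Sum>p\<in>I. \<Sum>q\<in>I. M p q) = (\<Sum>p\<in>I. a p)\<^sup>2)"
    unfolding Q T cardI by (simp only: of_real_power[symmetric] of_real_eq_iff)
  also have "\<dots> \<longleftrightarrow> ((\<forall>p\<in>I. \<forall>q\<in>I. a p = a q) \<and> (\<forall>p\<in>I. \<forall>q\<in>I. p \<noteq> q \<longrightarrow> M p q = 0))"
    by (rule cs_equal[OF finI Mnn Md])
  also have "\<dots> \<longleftrightarrow> ((\<forall>p\<in>fam_index n. \<forall>q\<in>fam_index n. vlen (fam B p) = vlen (fam B q)) \<and>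
      (\<forall>p\<in>fam_index n. \<forall>q\<in>fam_index n. p \<noteq> q \<longrightarrow> cinner (fam B p) (fam B q) = 0))"
    unfolding I_def vl M_def by simp
  finally show ?thesis .
qed

end
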